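(* Let $p\ne q$ be primes, $G=\mathbb{Z}_p^2\times\mathbb{Z}_q^2$, and $A\subseteq G$ with $|A|\ge pq$. Then either $A$ is a tile of $G$ and $|A|=pq$, or for all nonzero $a\in\mathbb{Z}_p^2$ and nonzero $b\in\mathbb{Z}_q^2$ at least one of the directions $[a,0]$, $[0,b]$, $[a,b]$ belongs to $\mathcal{D}(A)$.
   Context: Elements of $G$ are written $(a,b)$ with $a\in\mathbb{Z}_p^2$, $b\in\mathbb{Z}_q^2$. For $v,w\in G$, $v\sim w$ if they generate the same cyclic subgroup; the class of $(a,b)$ is the direction $[a,b]$. $\mathcal{D}(A)$ is the set of directions $[v]$ for which some $w\in A-A$ satisfies $w\sim v$. $A$ is a tile of $G$ if there is $T\subseteq G$ with $A+T=G$ and $|A||T|=|G|$. *)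

theory Defs
  imports "HOL-Computational_Algebra.Primes"
begin

type_synonym gelem = "(nat \<times> nat) \<times> (nat \<times> nat)"

definition Grp :: "nat \<Rightarrow> nat \<Rightarrow> gelem set" where
  "Grp p q = {((a1,a2),(b1,b2)). a1 < p \<and> a2 < p \<and> b1 < q \<and> b2 < q}"

definition gadd :: "nat \<Rightarrow> nat \<Rightarrow> gelem \<Rightarrow> gelem \<Rightarrow> gelem" where
  "gadd p q v w = (case v of ((a1,a2),(b1,b2)) \<Rightarrow> case w of ((c1,c2),(d1,d2)) \<Rightarrow>
     (((a1+c1) mod p, (a2+c2) mod p), ((b1+d1) mod q, (b2+d2) mod q)))"

definition gneg :: "nat \<Rightarrow> nat \<Rightarrow> gelem \<Rightarrow> gelem" where
  "gneg p q v = (case v of ((a1,a2),(b1,b2)) \<Rightarrow>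
     (((p - a1) mod p, (p - a2) mod p), ((q - b1) mod q, (q - b2) mod q)))"

definition gsmul :: "nat \<Rightarrow> nat \<Rightarrow> nat \<Rightarrow> gelem \<Rightarrow> gelem" where
  "gsmul p q k v = (case v of ((a1,a2),(b1,b2)) \<Rightarrow>
     (((k*a1) mod p, (k*a2) mod p), ((k*b1) mod q, (k*b2) mod q)))"

text \<open>Cyclic subgroup generated by v (G is finite, so nonnegative multiples suffice).\<close>
definition cyc :: "nat \<Rightarrow> nat \<Rightarrow> gelem \<Rightarrow> gelem set" where
  "cyc p q v = {gsmul p q k v | k. True}"

definition gequiv :: "nat \<Rightarrow> nat \<Rightarrow> gelem \<Rightarrow> gelem \<Rightarrow> bool" where
  "gequiv p q v w \<longleftrightarrow> cyc p q v = cyc p q w"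

definition diffset :: "nat \<Rightarrow> nat \<Rightarrow> gelem set \<Rightarrow> gelem set" where
  "diffset p q A = {gadd p q x (gneg p q y) | x y. x \<in> A \<and> y \<in> A}"

text \<open>Directions [v] in D(A), represented by their elements v \<in> G.\<close>
definition Dirs :: "nat \<Rightarrow> nat \<Rightarrow> gelem set \<Rightarrow> gelem set" where
  "Dirs p q A = {v \<in> Grp p q. \<exists>w \<in> diffset p q A. gequiv p q w v}"

definition sumset :: "nat \<Rightarrow> nat \<Rightarrow> gelem set \<Rightarrow> gelem set \<Rightarrow> gelem set" where
  "sumset p q A T = {gadd p q a t | a t. a \<in> A \<and> t \<in> T}"

definition is_tile :: "nat \<Rightarrow> nat \<Rightarrow> gelem set \<Rightarrow> bool" where
  "is_tile p q A \<longleftrightarrow> (\<exists>T \<subseteq> Grp p q. sumset p q A T = Grp p q \<and>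
      card A * card T = card (Grp p q))"

end

theory Submission
  imports Defs "HOL-Number_Theory.Cong"
begin


lemma sub_cong:
  fixes p u v :: nat
  assumes "v \<le> p"
  shows "[int ((u + (p - v) mod p) mod p) = int u - int v] (mod int p)"
proof -
  have "[int ((u + (p - v) mod p) mod p) = int u + int ((p - v) mod p)] (mod int p)"
    by (metis cong_int_iff cong_mod_left of_nat_add cong_refl)
  also have "[int u + int ((p - v) mod p) = int u + (int p - int v)] (mod int p)"
  proof -
    have "[int ((p - v) mod p) = int p - int v] (mod int p)"
      using assms by (simp add: cong_def of_nat_mod of_nat_diff)
    then show ?thesis by (simp add: cong_add_lcancel)
  qed
  also have "[int u + (int p - int v) = int u - int v] (mod int p)"
  proof -
    have "int u + (int p - int v) = (int u - int v) + int p" by simp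
    then show ?thesis by (simp only: cong_def mod_add_self2)
  qed
  finally show ?thesis .
qed

lemma L1:
  fixes p a1 a2 z1 z2 :: nat
  assumes "prime p" "a1 < p" "a1 \<noteq> 0" "z1 < p" "z2 < p"
    and "[int a1 * int z2 = int a2 * int z1] (mod int p)"
  shows "\<exists>k<p. z1 = k*a1 mod p \<and> z2 = k*a2 mod p"
proof -
  have cop: "coprime a1 p" using assms
    by (metis coprime_commute dvd_imp_le neq0_conv prime_imp_coprime_nat leD)
  then obtain i where i: "[a1 * i = 1] (mod p)" using cong_solve_coprime_nat by auto
  define k where "k = (z1 * i) mod p"
  have kp: "k < p" using assms k_def prime_gt_0_nat by auto
  have c1: "[k * a1 = z1] (mod p)"
  proof -
    have "[k * a1 = z1 * i * a1] (mod p)" unfolding k_def by (simp add: cong_def mod_mult_left_eq)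
    also have "[z1 * i * a1 = z1 * (a1 * i)] (mod p)" by (simp add: ac_simps)
    also have "[z1 * (a1 * i) = z1 * 1] (mod p)" using i cong_mult cong_refl by blast
    finally show ?thesis by simp
  qed
  have e1: "z1 = k*a1 mod p" using c1 assms by (simp add: cong_def)
  have "[int a1 * (int k * int a2) = int a1 * int z2] (mod int p)"
  proof -
    have "[int a1 * (int k * int a2) = int a2 * (int k * int a1)] (mod int p)" by (simp add: ac_simps)
    also have "[int a2 * (int k * int a1) = int a2 * int z1] (mod int p)"
      using c1 by (metis cong_int_iff cong_scalar_left of_nat_mult)
    also have "[int a2 * int z1 = int a1 * int z2] (mod int p)" using assms(6) by (simp add: cong_sym)
    finally show ?thesis .
  qed
  then have "[int k * int a2 = int z2] (mod int p)"
    using cop cong_mult_lcancel by (metis coprime_int_iff)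
  then have "[k * a2 = z2] (mod p)" by (metis cong_int_iff of_nat_mult)
  then have e2: "z2 = k*a2 mod p" using assms by (simp add: cong_def)
  show ?thesis using kp e1 e2 by blast
qed

definition fp :: "nat \<Rightarrow> nat \<Rightarrow> nat \<Rightarrow> nat \<Rightarrow> nat \<Rightarrow> nat" where
  "fp p a1 a2 x1 x2 = (a1*x2 + (p - a2)*x1) mod p"

definition sb :: "nat \<Rightarrow> nat \<Rightarrow> nat \<Rightarrow> nat" where
  "sb p u v = (u + (p - v) mod p) mod p"

lemma fp_cong:
  assumes "a2 \<le> p"
  shows "[int (fp p a1 a2 x1 x2) = int a1 * int x2 - int a2 * int x1] (mod int p)"
proof -
  have "[int (fp p a1 a2 x1 x2) = int a1 * int x2 + (int p - int a2) * int x1] (mod int p)"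
    unfolding fp_def using assms by (simp add: cong_def of_nat_mod of_nat_diff)
  also have "int a1 * int x2 + (int p - int a2) * int x1 = (int a1 * int x2 - int a2 * int x1) + int x1 * int p"
    by (simp add: algebra_simps)
  also have "[\<dots> = int a1 * int x2 - int a2 * int x1] (mod int p)"
    by (simp only: cong_def mod_mult_self1)
  finally show ?thesis .
qed

lemma L1':
  fixes p a1 a2 z1 z2 :: nat
  assumes "prime p" "a1 < p" "a2 < p" "a1 \<noteq> 0 \<or> a2 \<noteq> 0" "z1 < p" "z2 < p"
    and "[int a1 * int z2 = int a2 * int z1] (mod int p)"
  shows "\<exists>k<p. z1 = k*a1 mod p \<and> z2 = k*a2 mod p"
proof (cases "a1 = 0")
  case False
  then show ?thesis using L1 assms by blast
next
  case True
  then have "a2 \<noteq> 0" using assms by auto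
  moreover have "[int a2 * int z1 = int a1 * int z2] (mod int p)" using assms(7) by (simp add: cong_sym)
  ultimately show ?thesis using L1[of p a2 z2 z1 a1] assms by blast
qed

lemma KEY1:
  fixes p a1 a2 x1 x2 y1 y2 :: nat
  assumes "prime p" "a1 < p" "a2 < p" "a1 \<noteq> 0 \<or> a2 \<noteq> 0"
    "x1 < p" "x2 < p" "y1 < p" "y2 < p"
    "fp p a1 a2 x1 x2 = fp p a1 a2 y1 y2"
  shows "\<exists>k<p. sb p x1 y1 = k*a1 mod p \<and> sb p x2 y2 = k*a2 mod p"
proof -
  have p0: "p > 0" using assms prime_gt_0_nat by blast
  have c1: "[int (sb p x1 y1) = int x1 - int y1] (mod int p)" unfolding sb_def
    using sub_cong assms by simp
  have c2: "[int (sb p x2 y2) = int x2 - int y2] (mod int p)" unfolding sb_def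
    using sub_cong assms by simp
  have "[int a1 * int x2 - int a2 * int x1 = int a1 * int y2 - int a2 * int y1] (mod int p)"
    using fp_cong[of a2 p a1 x1 x2] fp_cong[of a2 p a1 y1 y2] assms(3,9)
    by (metis cong_sym cong_trans less_imp_le)
  then have "[(int a1 * int x2 - int a2 * int x1) - (int a1 * int y2 - int a2 * int y1) = 0] (mod int p)"
    by (simp add: cong_diff_iff_cong_0)
  moreover have "(int a1 * int x2 - int a2 * int x1) - (int a1 * int y2 - int a2 * int y1)
     = int a1 * (int x2 - int y2) - int a2 * (int x1 - int y1)" by (simp add: algebra_simps)
  ultimately have "[int a1 * (int x2 - int y2) = int a2 * (int x1 - int y1)] (mod int p)"
    by (simp add: cong_diff_iff_cong_0)
  moreover have "[int a1 * int (sb p x2 y2) = int a1 * (int x2 - int y2)] (mod int p)"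
    using c2 cong_scalar_left by blast
  moreover have "[int a2 * int (sb p x1 y1) = int a2 * (int x1 - int y1)] (mod int p)"
    using c1 cong_scalar_left by blast
  ultimately have "[int a1 * int (sb p x2 y2) = int a2 * int (sb p x1 y1)] (mod int p)"
    by (meson cong_sym cong_trans)
  moreover have "sb p x1 y1 < p" "sb p x2 y2 < p" unfolding sb_def using p0 by auto
  ultimately show ?thesis using L1' assms by blast
qed


lemma sb_zero: "u < p \<Longrightarrow> v < p \<Longrightarrow> sb p u v = 0 \<Longrightarrow> u = v"
proof -
  assume a: "u < p" "v < p" "sb p u v = 0"
  have "[int (sb p u v) = int u - int v] (mod int p)" unfolding sb_def using sub_cong a by simp
  then have "[0 = int u - int v] (mod int p)" using a by simp
  then have "[int v = int u] (mod int p)" by (simp add: cong_0_iff cong_iff_dvd_diff)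
  then have "[v = u] (mod p)" by (simp add: cong_int_iff)
  then show "u = v" using a by (simp add: cong_def)
qed

lemma add_sb: "u < p \<Longrightarrow> v < p \<Longrightarrow> (u + sb p v u) mod p = v"
proof -
  assume a: "u < p" "v < p"
  have "[int (sb p v u) = int v - int u] (mod int p)" unfolding sb_def using sub_cong a by simp
  then have "[int u + int (sb p v u) = int u + (int v - int u)] (mod int p)"
    using cong_add[OF cong_refl[of "int u"]] by blast
  moreover have "int u + (int v - int u) = int v" by simp
  ultimately have "[int (u + sb p v u) = int v] (mod int p)" by (simp only: of_nat_add)
  then have "[u + sb p v u = v] (mod p)" by (metis cong_int_iff of_nat_add)
  then show ?thesis using a by (simp add: cong_def)
qed

lemma smul_comp1:
  fixes c p m k :: nat
  assumes "c < p" "[m = k] (mod p)"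
  shows "(m * (if k=0 then 0 else c)) mod p = k*c mod p"
proof (cases "k = 0")
  case False
  then have "[m*c = k*c] (mod p)" using assms cong_scalar_right by blast
  then show ?thesis using False by (simp add: cong_def)
qed simp

lemma smul_comp2:
  fixes c p n k :: nat
  assumes "c < p" "k \<noteq> 0 \<longrightarrow> [n*k = 1] (mod p)"
  shows "(n * (k*c mod p)) mod p = (if k=0 then 0 else c)"
proof (cases "k = 0")
  case False
  then have "[n*k*c = 1*c] (mod p)" using assms cong_scalar_right by blast
  have "(n * (k*c mod p)) mod p = (n*k*c) mod p" by (simp add: mod_mult_right_eq mult.assoc)
  also have "\<dots> = (1*c) mod p" using \<open>[n*k*c = 1*c] (mod p)\<close> by (simp add: cong_def)
  also have "\<dots> = c" using assms by simp
  finally show ?thesis using False by simp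
qed simp

lemma gsmul_gsmul: "gsmul p q m (gsmul p q n v) = gsmul p q (m*n) v"
  by (cases v) (auto simp: gsmul_def mod_mult_right_eq mult.assoc)

lemma cyc_eqI:
  assumes "w = gsmul p q m v" "v = gsmul p q n w"
  shows "cyc p q w = cyc p q v"
proof
  show "cyc p q w \<subseteq> cyc p q v" unfolding cyc_def using assms(1) gsmul_gsmul by blast
  show "cyc p q v \<subseteq> cyc p q w" unfolding cyc_def using assms(2) gsmul_gsmul by blast
qed

lemma gadd_gneg: "gadd p q ((x1,x2),(x3,x4)) (gneg p q ((y1,y2),(y3,y4))) =
   ((sb p x1 y1, sb p x2 y2),(sb q x3 y3, sb q x4 y4))"
  by (simp add: gadd_def gneg_def sb_def)



lemma cop_lt: "prime (p::nat) \<Longrightarrow> 0 < k \<Longrightarrow> k < p \<Longrightarrow> coprime k p"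
  by (metis coprime_commute dvd_imp_le prime_imp_coprime_nat leD)

lemma cancel_lt:
  fixes p a1 a2 k k' :: nat
  assumes "prime p" "a1 < p" "a2 < p" "a1 \<noteq> 0 \<or> a2 \<noteq> 0" "k < p" "k' < p"
    "k*a1 mod p = k'*a1 mod p" "k*a2 mod p = k'*a2 mod p"
  shows "k = k'"
proof -
  have "[k = k'] (mod p)"
  proof (cases "a1 = 0")
    case False
    then have "coprime a1 p" using cop_lt assms by auto
    then show ?thesis using assms(7) cong_mult_rcancel_nat unfolding cong_def by blast
  next
    case True
    then have "coprime a2 p" using cop_lt assms by auto
    then show ?thesis using assms(8) cong_mult_rcancel_nat unfolding cong_def by blast
  qed
  then show ?thesis using assms by (simp add: cong_def)
qed

lemma Grp_eq: "Grp p q = ({..<p} \<times> {..<p}) \<times> ({..<q} \<times> {..<q})"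
  by (auto simp: Grp_def)

definition FF :: "nat \<Rightarrow> nat \<Rightarrow> nat \<Rightarrow> nat \<Rightarrow> nat \<Rightarrow> nat \<Rightarrow> gelem \<Rightarrow> nat \<times> nat" where
  "FF p q a1 a2 b1 b2 v = (case v of ((x1,x2),(y1,y2)) \<Rightarrow> (fp p a1 a2 x1 x2, fp q b1 b2 y1 y2))"

lemma KEY:
  assumes "prime p" "prime q" "a1<p" "a2<p" "b1<q" "b2<q" "a1\<noteq>0 \<or> a2\<noteq>0" "b1\<noteq>0 \<or> b2\<noteq>0"
   "x \<in> Grp p q" "y \<in> Grp p q" "FF p q a1 a2 b1 b2 x = FF p q a1 a2 b1 b2 y"
  shows "\<exists>k<p. \<exists>l<q. gadd p q x (gneg p q y) = ((k*a1 mod p, k*a2 mod p),(l*b1 mod q, l*b2 mod q))"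
proof -
  obtain x1 x2 x3 x4 where x: "x = ((x1,x2),(x3,x4))" by (metis prod.exhaust)
  obtain y1 y2 y3 y4 where y: "y = ((y1,y2),(y3,y4))" by (metis prod.exhaust)
  have f: "fp p a1 a2 x1 x2 = fp p a1 a2 y1 y2" "fp q b1 b2 x3 x4 = fp q b1 b2 y3 y4"
    using assms(11) by (auto simp: FF_def x y)
  have r: "x1<p" "x2<p" "x3<q" "x4<q" "y1<p" "y2<p" "y3<q" "y4<q"
    using assms(9,10) by (auto simp: Grp_def x y)
  obtain k where k: "k<p" "sb p x1 y1 = k*a1 mod p" "sb p x2 y2 = k*a2 mod p"
    using KEY1[of p a1 a2 x1 x2 y1 y2] assms f r by blast
  obtain l where l: "l<q" "sb q x3 y3 = l*b1 mod q" "sb q x4 y4 = l*b2 mod q"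
    using KEY1[of q b1 b2 x3 x4 y3 y4] assms f r by blast
  show ?thesis using k l by (auto simp: x y gadd_gneg)
qed

theorem lemma4p1:
  fixes p q :: nat and A :: "gelem set"
  assumes "prime p" and "prime q" and "p \<noteq> q"
    and "A \<subseteq> Grp p q" and "card A \<ge> p * q"
  shows "(is_tile p q A \<and> card A = p * q) \<or>
    (\<forall>a b. (a, b) \<in> Grp p q \<and> a \<noteq> (0, 0) \<and> b \<noteq> (0, 0) \<longrightarrow>
       (a, (0, 0)) \<in> Dirs p q A \<or> ((0, 0), b) \<in> Dirs p q A \<or> (a, b) \<in> Dirs p q A)"
proof (rule disjCI)
  assume nQ: "\<not> (\<forall>a b. (a, b) \<in> Grp p q \<and> a \<noteq> (0, 0) \<and> b \<noteq> (0, 0) \<longrightarrow>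
       (a, (0, 0)) \<in> Dirs p q A \<or> ((0, 0), b) \<in> Dirs p q A \<or> (a, b) \<in> Dirs p q A)"
  then obtain a b where ab: "(a,b) \<in> Grp p q" "a \<noteq> (0,0)" "b \<noteq> (0,0)"
    and nd1: "(a,(0,0)) \<notin> Dirs p q A" and nd2: "((0,0),b) \<notin> Dirs p q A"
    and nd3: "(a,b) \<notin> Dirs p q A" by blast
  obtain a1 a2 where a: "a = (a1,a2)" by fastforce
  obtain b1 b2 where b: "b = (b1,b2)" by fastforce
  have p0: "p > 0" "q > 0" using assms prime_gt_0_nat by auto
  have ar: "a1<p" "a2<p" "b1<q" "b2<q" using ab(1) by (auto simp: Grp_def a b)
  have anz: "a1\<noteq>0 \<or> a2\<noteq>0" "b1 \<noteq> 0 \<or> b2 \<noteq> 0" using ab a b by auto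
  have copq: "coprime p q" using assms by (simp add: primes_coprime)
  let ?F = "FF p q a1 a2 b1 b2"
  have finG: "finite (Grp p q)" by (simp add: Grp_eq)
  have finA: "finite A" using finite_subset assms(4) finG by blast
  have Fr: "\<And>v. ?F v \<in> {..<p} \<times> {..<q}" using p0 by (auto simp: FF_def fp_def split: prod.splits)
  have inj: "inj_on ?F A"
  proof (rule inj_onI)
    fix x y assume xy: "x \<in> A" "y \<in> A" "?F x = ?F y"
    show "x = y"
    proof (rule ccontr)
      assume ne: "x \<noteq> y"
      define d where "d = gadd p q x (gneg p q y)"
      obtain k l where kl: "k<p" "l<q" and d: "d = ((k*a1 mod p, k*a2 mod p),(l*b1 mod q, l*b2 mod q))"
        using KEY[of p q a1 a2 b1 b2 x y] assms ar anz xy unfolding d_def by blast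
      have dD: "d \<in> diffset p q A" using xy unfolding diffset_def d_def by blast
      have kl0: "k \<noteq> 0 \<or> l \<noteq> 0"
      proof (rule ccontr)
        assume "\<not> (k \<noteq> 0 \<or> l \<noteq> 0)"
        then have z: "k=0" "l=0" by auto
        obtain x1 x2 x3 x4 where x: "x = ((x1,x2),(x3,x4))" by (metis prod.exhaust)
        obtain y1 y2 y3 y4 where y: "y = ((y1,y2),(y3,y4))" by (metis prod.exhaust)
        have r: "x1<p" "x2<p" "x3<q" "x4<q" "y1<p" "y2<p" "y3<q" "y4<q"
          using assms(4) xy by (auto simp: Grp_def x y)
        have "sb p x1 y1 = 0" "sb p x2 y2 = 0" "sb q x3 y3 = 0" "sb q x4 y4 = 0"
          using d z unfolding d_def x y gadd_gneg by auto
        then show False using sb_zero r ne x y by metis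
      qed
      define v where "v = ((if k=0 then 0 else a1, if k=0 then 0 else a2),(if l=0 then 0 else b1, if l=0 then 0 else b2))"
      obtain m where m: "[m = k] (mod p)" "[m = l] (mod q)"
        using binary_chinese_remainder_nat[OF copq] by blast
      obtain n1 where n1: "k\<noteq>0 \<longrightarrow> [n1*k = 1] (mod p)"
      proof (cases "k = 0")
        case False
        then have "coprime k p" using cop_lt assms kl by auto
        then obtain x where "[k*x = Suc 0] (mod p)" using cong_solve_coprime_nat by blast
        then show ?thesis using that[of x] by (simp add: mult.commute)
      qed auto
      obtain n2 where n2: "l\<noteq>0 \<longrightarrow> [n2*l = 1] (mod q)"
      proof (cases "l = 0")
        case False
        then have "coprime l q" using cop_lt assms kl by auto
        then obtain x where "[l*x = Suc 0] (mod q)" using cong_solve_coprime_nat by blast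
        then show ?thesis using that[of x] by (simp add: mult.commute)
      qed auto
      obtain n where n: "[n = n1] (mod p)" "[n = n2] (mod q)"
        using binary_chinese_remainder_nat[OF copq] by blast
      have nk: "k\<noteq>0 \<longrightarrow> [n*k = 1] (mod p)" using n1 n(1)
        by (meson cong_scalar_right cong_trans)
      have nl: "l\<noteq>0 \<longrightarrow> [n*l = 1] (mod q)" using n2 n(2)
        by (meson cong_scalar_right cong_trans)
      have e1: "d = gsmul p q m v"
        using smul_comp1[OF ar(1) m(1)] smul_comp1[OF ar(2) m(1)]
          smul_comp1[OF ar(3) m(2)] smul_comp1[OF ar(4) m(2)]
        by (simp add: gsmul_def v_def d)
      have e2: "v = gsmul p q n d"
        using smul_comp2[OF ar(1) nk] smul_comp2[OF ar(2) nk]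
          smul_comp2[OF ar(3) nl] smul_comp2[OF ar(4) nl]
        by (simp add: gsmul_def v_def d)
      have "gequiv p q d v" using cyc_eqI[OF e1 e2] unfolding gequiv_def by auto
      moreover have "v \<in> Grp p q" using ar p0 by (auto simp: v_def Grp_def)
      ultimately have "v \<in> Dirs p q A" using dD unfolding Dirs_def by blast
      then show False using nd1 nd2 nd3 kl0 a b unfolding v_def
        by (cases "k = 0"; cases "l = 0") auto
    qed
  qed
  have img_sub: "?F ` A \<subseteq> {..<p} \<times> {..<q}" using Fr by blast
  have cardle: "card A \<le> p*q"
    using card_inj_on_le[OF inj img_sub] by simp
  have cA: "card A = p*q" using cardle assms(5) by simp
  have img: "?F ` A = {..<p} \<times> {..<q}"
    using card_subset_eq[OF _ img_sub] card_image[OF inj] cA by simp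
  define h where "h = (\<lambda>(k,l). ((k*a1 mod p, k*a2 mod p),(l*b1 mod q, l*b2 mod q)))"
  define T where "T = h ` ({..<p} \<times> {..<q})"
  have injT: "inj_on h ({..<p} \<times> {..<q})"
  proof (rule inj_onI)
    fix u w assume uw: "u \<in> {..<p} \<times> {..<q}" "w \<in> {..<p} \<times> {..<q}" "h u = h w"
    obtain k l where u: "u = (k,l)" by fastforce
    obtain k' l' where w: "w = (k',l')" by fastforce
    have "k = k'" using cancel_lt[of p a1 a2 k k'] assms ar anz uw unfolding u w h_def by auto
    moreover have "l = l'" using cancel_lt[of q b1 b2 l l'] assms ar anz uw unfolding u w h_def by auto
    ultimately show "u = w" using u w by simp
  qed
  have cT: "card T = p*q" unfolding T_def using card_image[OF injT] by simp
  have TG: "T \<subseteq> Grp p q" unfolding T_def h_def using p0 by (auto simp: Grp_def)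
  have "sumset p q A T = Grp p q"
  proof
    show "sumset p q A T \<subseteq> Grp p q"
      unfolding sumset_def using p0 by (auto simp: gadd_def Grp_def split: prod.splits)
    show "Grp p q \<subseteq> sumset p q A T"
    proof
      fix g assume g: "g \<in> Grp p q"
      then obtain x where x: "x \<in> A" "?F x = ?F g" using img Fr by (metis imageE)
      have xG: "x \<in> Grp p q" using x assms(4) by blast
      obtain k l where kl: "k<p" "l<q" and z: "gadd p q g (gneg p q x) = h (k,l)"
        using KEY[of p q a1 a2 b1 b2 g x] assms ar anz x g xG unfolding h_def by auto
      have "gadd p q x (gadd p q g (gneg p q x)) = g"
      proof -
        obtain x1 x2 x3 x4 where xx: "x = ((x1,x2),(x3,x4))" by (metis prod.exhaust)
        obtain g1 g2 g3 g4 where gg: "g = ((g1,g2),(g3,g4))" by (metis prod.exhaust)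
        have r: "x1<p" "x2<p" "x3<q" "x4<q" "g1<p" "g2<p" "g3<q" "g4<q"
          using xG g by (auto simp: Grp_def xx gg)
        show ?thesis unfolding xx gg gadd_gneg using add_sb r by (simp add: gadd_def)
      qed
      moreover have "h (k,l) \<in> T" unfolding T_def using kl by blast
      ultimately have "g = gadd p q x (h (k,l))" "x \<in> A" "h (k,l) \<in> T" using z x by auto
      then show "g \<in> sumset p q A T" unfolding sumset_def by blast
    qed
  qed
  moreover have "card (Grp p q) = (p*q) * (p*q)" by (simp add: Grp_eq card_cartesian_product)
  ultimately show "is_tile p q A \<and> card A = p * q"
    unfolding is_tile_def using TG cA cT by auto
qed

end
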